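(* Let $(\varepsilon_k)_{k\ge0}$ be an infinite sequence of real one-particle energies with $\sum_ke^{-\beta\varepsilon_k}<\infty$ for some $\beta>0$. For $N\ge1$ consider the canonical $N$-particle distribution of noninteracting bosons on occupation sequences $(n_k)_{k\ge0}$ of nonnegative integers with $\sum_kn_k=N$, $P_N((n_k))\propto e^{-\beta\sum_k\varepsilon_kn_k}$, and write $\langle n_k\rangle_N$ for its expectations. If $\varepsilon_i<\varepsilon_j$, then $\langle n_j\rangle_N<\langle n_i\rangle_N$. *)

theory Defs
  imports "HOL-Analysis.Analysis"
begin

definition occ_support :: "(nat \<Rightarrow> nat) \<Rightarrow> nat set" where
  "occ_support n = {k. n k \<noteq> 0}"

definition occ_configs :: "nat \<Rightarrow> (nat \<Rightarrow> nat) set" where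
  "occ_configs N = {n. finite (occ_support n) \<and> (\<Sum>k\<in>occ_support n. n k) = N}"

definition boltz_weight :: "real \<Rightarrow> (nat \<Rightarrow> real) \<Rightarrow> (nat \<Rightarrow> nat) \<Rightarrow> real" where
  "boltz_weight \<beta> \<epsilon> n = exp (- \<beta> * (\<Sum>k\<in>occ_support n. \<epsilon> k * real (n k)))"

definition canon_Z :: "real \<Rightarrow> (nat \<Rightarrow> real) \<Rightarrow> nat \<Rightarrow> real" where
  "canon_Z \<beta> \<epsilon> N = (\<Sum>\<^sub>\<infinity>n\<in>occ_configs N. boltz_weight \<beta> \<epsilon> n)"

definition canon_mean_occ :: "real \<Rightarrow> (nat \<Rightarrow> real) \<Rightarrow> nat \<Rightarrow> nat \<Rightarrow> real" where
  "canon_mean_occ \<beta> \<epsilon> N j =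
     (\<Sum>\<^sub>\<infinity>n\<in>occ_configs N. real (n j) * boltz_weight \<beta> \<epsilon> n) / canon_Z \<beta> \<epsilon> N"

end

theory Submission imports Defs begin


definition cnt :: "nat \<Rightarrow> (nat \<Rightarrow> nat) \<Rightarrow> nat \<Rightarrow> nat" where
  "cnt N g k = card {m. m < N \<and> g m = k}"

lemma supp_sum_eq:
  assumes "finite T" "occ_support n \<subseteq> T" "\<And>k. n k = 0 \<Longrightarrow> F k = 0"
  shows "sum F (occ_support n) = sum F T"
  using assms by (intro sum.mono_neutral_left) (auto simp: occ_support_def)

lemma occ_configs_sumT:
  assumes "n \<in> occ_configs N" "finite T" "occ_support n \<subseteq> T"
  shows "(\<Sum>k\<in>T. n k) = N"
  using assms supp_sum_eq[OF assms(2,3), of n] by (auto simp: occ_configs_def)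

lemma occ_configsI:
  assumes "finite T" "occ_support n \<subseteq> T" "(\<Sum>k\<in>T. n k) = N"
  shows "n \<in> occ_configs N"
  using assms supp_sum_eq[OF assms(1,2), of n] finite_subset[OF assms(2,1)]
  by (auto simp: occ_configs_def)

lemma weightT:
  assumes "finite T" "occ_support n \<subseteq> T"
  shows "boltz_weight \<beta> \<epsilon> n = exp (- \<beta> * (\<Sum>k\<in>T. \<epsilon> k * real (n k)))"
  unfolding boltz_weight_def using supp_sum_eq[OF assms, of "\<lambda>k. \<epsilon> k * real (n k)"] by simp

lemma cnt_supp: "occ_support (cnt N g) = g ` {..<N}"
  by (auto simp: occ_support_def cnt_def)

lemma cnt_in: "cnt N g \<in> occ_configs N"
proof (rule occ_configsI[of "g ` {..<N}"])
  show "(\<Sum>k\<in>g ` {..<N}. cnt N g k) = N"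
    using sum.image_gen[of "{..<N}" "\<lambda>_. 1::nat" g] by (simp add: cnt_def)
qed (auto simp: cnt_supp)

lemma cnt_weight:
  "boltz_weight \<beta> \<epsilon> (cnt N g) = (\<Prod>m<N. exp (- \<beta> * \<epsilon> (g m)))"
proof -
  have "(\<Sum>k\<in>g ` {..<N}. \<epsilon> k * real (cnt N g k)) = (\<Sum>m<N. \<epsilon> (g m))"
    using sum.image_gen[of "{..<N}" "\<lambda>m. \<epsilon> (g m)" g] by (simp add: cnt_def mult.commute)
  then show ?thesis
    by (simp add: weightT[of "g ` {..<N}" "cnt N g"] cnt_supp exp_sum sum_distrib_left flip: sum_negf)
qed

lemma cnt_restrict: "cnt N (restrict g {..<N}) = cnt N g"
  by (auto simp: cnt_def intro!: arg_cong[where f=card])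

lemma cnt_surj: "n \<in> occ_configs N \<Longrightarrow> \<exists>g. cnt N g = n"
proof (induction N arbitrary: n)
  case 0
  then have "occ_support n = {}" by (auto simp: occ_configs_def occ_support_def)
  then have "n = (\<lambda>_. 0)" by (auto simp: occ_support_def)
  then show ?case by (auto simp: cnt_def)
next
  case (Suc N)
  let ?T = "occ_support n"
  have fin: "finite ?T" using Suc.prems by (auto simp: occ_configs_def)
  have "?T \<noteq> {}" using Suc.prems by (auto simp: occ_configs_def)
  then obtain k0 where k0: "n k0 > 0" by (auto simp: occ_support_def)
  define n' where "n' = n(k0 := n k0 - 1)"
  have k0T: "k0 \<in> ?T" using k0 by (auto simp: occ_support_def)
  have "(\<Sum>k\<in>?T. n k) = Suc N" using Suc.prems by (auto simp: occ_configs_def)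
  then have s: "n k0 + (\<Sum>k\<in>?T-{k0}. n k) = Suc N" using sum.remove[OF fin k0T, of n] by linarith
  have "(\<Sum>k\<in>?T. n' k) = n' k0 + (\<Sum>k\<in>?T-{k0}. n' k)" using sum.remove[OF fin k0T] by simp
  also have "\<dots> = N" using s k0 by (simp add: n'_def)
  finally have "n' \<in> occ_configs N"
    by (intro occ_configsI[OF fin]) (auto simp: occ_support_def n'_def)
  then obtain g' where g': "cnt N g' = n'" using Suc.IH by blast
  define g where "g = g'(N := k0)"
  have "cnt (Suc N) g k = n k" for k
  proof -
    have "{m. m < Suc N \<and> g m = k} = {m. m < N \<and> g' m = k} \<union> (if k = k0 then {N} else {})"
      by (auto simp: g_def less_Suc_eq)
    then have "cnt (Suc N) g k = cnt N g' k + (if k = k0 then 1 else 0)"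
      by (auto simp: cnt_def)
    then show ?thesis using g' k0 by (auto simp: n'_def)
  qed
  then show ?case by blast
qed


lemma weight_nonneg: "boltz_weight \<beta> \<epsilon> n \<ge> 0"
  by (simp add: boltz_weight_def)

lemma finite_sum_bound:
  assumes sm: "summable (\<lambda>k. exp (- \<beta> * \<epsilon> k))"
    and F: "finite F" "F \<subseteq> occ_configs N"
  shows "sum (boltz_weight \<beta> \<epsilon>) F \<le> (\<Sum>k. exp (- \<beta> * \<epsilon> k)) ^ N"
proof -
  define x where "x k = exp (- \<beta> * \<epsilon> k)" for k
  define G where "G n = restrict (SOME g. cnt N g = n) {..<N}" for n
  have cG: "cnt N (G n) = n" if "n \<in> F" for n
  proof -
    have "\<exists>g. cnt N g = n" using cnt_surj that F by blast
    then have "cnt N (SOME g. cnt N g = n) = n" by (rule someI_ex)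
    then show ?thesis by (simp add: G_def cnt_restrict)
  qed
  have inj: "inj_on G F" by (metis cG inj_onI)
  have finG: "finite (G ` F)" using F by simp
  define V where "V = (\<Union>g\<in>G ` F. g ` {..<N})"
  have finV: "finite V" using F(1) by (simp add: V_def)
  define K where "K = Suc (Max V)"
  have VK: "v < K" if "v \<in> V" for v using finV that by (simp add: K_def le_imp_less_Suc)
  have sub: "G ` F \<subseteq> PiE {..<N} (\<lambda>_. {..<K})"
  proof
    fix g assume g: "g \<in> G ` F"
    then obtain n where "g = G n" by blast
    then have "g m = undefined" if "m \<notin> {..<N}" for m using that by (simp add: G_def)
    moreover have "g m < K" if "m < N" for m using VK g that by (auto simp: V_def)
    ultimately show "g \<in> PiE {..<N} (\<lambda>_. {..<K})" by (auto simp: PiE_def extensional_def)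
  qed
  have "sum (boltz_weight \<beta> \<epsilon>) F = sum (\<lambda>n. boltz_weight \<beta> \<epsilon> (cnt N (G n))) F"
    using cG by simp
  also have "\<dots> = sum (\<lambda>g. boltz_weight \<beta> \<epsilon> (cnt N g)) (G ` F)"
    using sum.reindex[OF inj, of "\<lambda>g. boltz_weight \<beta> \<epsilon> (cnt N g)"] by simp
  also have "\<dots> = sum (\<lambda>g. \<Prod>m<N. x (g m)) (G ` F)"
    by (simp add: cnt_weight x_def)
  also have "\<dots> \<le> sum (\<lambda>g. \<Prod>m<N. x (g m)) (PiE {..<N} (\<lambda>_. {..<K}))"
    by (intro sum_mono2 sub) (auto simp: finite_PiE x_def intro!: prod_nonneg)
  also have "\<dots> = (\<Prod>m<N. \<Sum>k<K. x k)"
    by (subst prod_sum_PiE) auto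
  also have "\<dots> = (\<Sum>k<K. x k) ^ N" by simp
  also have "\<dots> \<le> (\<Sum>k. x k) ^ N"
    using sm by (intro power_mono sum_le_suminf) (auto simp: x_def intro!: sum_nonneg)
  finally show ?thesis by (simp add: x_def)
qed

lemma weight_summable:
  assumes sm: "summable (\<lambda>k. exp (- \<beta> * \<epsilon> k))"
  shows "boltz_weight \<beta> \<epsilon> summable_on occ_configs N"
  by (rule nonneg_bdd_above_summable_on) (auto simp: weight_nonneg bdd_above_def intro!: exI[of _ "(\<Sum>k. exp (- \<beta> * \<epsilon> k)) ^ N"] finite_sum_bound[OF sm])

lemma occ_le: "n \<in> occ_configs N \<Longrightarrow> n k \<le> N"
proof -
  assume n: "n \<in> occ_configs N"
  then have f: "finite (occ_support n)" by (simp add: occ_configs_def)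
  show ?thesis
  proof (cases "k \<in> occ_support n")
    case True
    then show ?thesis using member_le_sum[OF True, of n] f n by (auto simp: occ_configs_def)
  qed (auto simp: occ_support_def)
qed

lemma occ_weight_summable:
  assumes sm: "summable (\<lambda>k. exp (- \<beta> * \<epsilon> k))"
  shows "(\<lambda>n. real (n k) * boltz_weight \<beta> \<epsilon> n) summable_on occ_configs N"
proof (rule summable_on_comparison_test)
  show "(\<lambda>n. real N * boltz_weight \<beta> \<epsilon> n) summable_on occ_configs N"
    using weight_summable[OF sm] by (rule summable_on_cmult_right)
  show "real (n k) * boltz_weight \<beta> \<epsilon> n \<le> real N * boltz_weight \<beta> \<epsilon> n" if "n \<in> occ_configs N" for n
    using occ_le[OF that, of k] by (intro mult_right_mono) (auto simp: weight_nonneg)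
qed (auto simp: weight_nonneg)


lemma sum_two:
  assumes "finite T" "i \<in> T" "j \<in> T" "i \<noteq> j"
  shows "sum f T = f i + f j + sum f (T - {i, j})"
proof -
  have "sum f T = f i + sum f (T - {i})" using sum.remove[OF assms(1,2)] .
  also have "sum f (T - {i}) = f j + sum f (T - {i} - {j})"
    using sum.remove[of "T - {i}" j f] assms by auto
  also have "T - {i} - {j} = T - {i, j}" by auto
  finally show ?thesis by (simp add: add.assoc)
qed

definition sw :: "nat \<Rightarrow> nat \<Rightarrow> (nat \<Rightarrow> nat) \<Rightarrow> nat \<Rightarrow> nat" where
  "sw i j n = n(i := n j, j := n i)"

lemma sw_sw: "sw i j (sw i j n) = n"
  by (auto simp: sw_def fun_eq_iff)

lemma sw_in:
  assumes "i \<noteq> j" "n \<in> occ_configs N"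
  shows "sw i j n \<in> occ_configs N"
proof -
  define T where "T = occ_support n \<union> {i, j}"
  have fT: "finite T" using assms by (simp add: T_def occ_configs_def)
  have s1: "occ_support (sw i j n) \<subseteq> T" by (auto simp: T_def occ_support_def sw_def)
  have ij: "i \<in> T" "j \<in> T" by (auto simp: T_def)
  have c: "(\<Sum>k\<in>T - {i, j}. sw i j n k) = (\<Sum>k\<in>T - {i, j}. n k)"
    by (rule sum.cong) (auto simp: sw_def)
  have "(\<Sum>k\<in>T. sw i j n k) = (\<Sum>k\<in>T. n k)"
    unfolding sum_two[OF fT ij assms(1), of "sw i j n"] sum_two[OF fT ij assms(1), of n] c
    using assms(1) by (simp add: sw_def)
  also have "\<dots> = N" using occ_configs_sumT[OF assms(2) fT] by (auto simp: T_def)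
  finally show ?thesis using occ_configsI[OF fT s1] by simp
qed

lemma sw_bij: "i \<noteq> j \<Longrightarrow> bij_betw (sw i j) (occ_configs N) (occ_configs N)"
  by (rule bij_betw_byWitness[where f'="sw i j"]) (auto simp: sw_sw sw_in)

lemma sw_weight:
  assumes "i \<noteq> j" "n \<in> occ_configs N"
  shows "boltz_weight \<beta> \<epsilon> (sw i j n) =
     boltz_weight \<beta> \<epsilon> n * exp (- \<beta> * (\<epsilon> j - \<epsilon> i) * (real (n i) - real (n j)))"
proof -
  define T where "T = occ_support n \<union> {i, j}"
  have fT: "finite T" using assms by (simp add: T_def occ_configs_def)
  have s1: "occ_support (sw i j n) \<subseteq> T" by (auto simp: T_def occ_support_def sw_def)
  have s2: "occ_support n \<subseteq> T" by (auto simp: T_def)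
  have ij: "i \<in> T" "j \<in> T" by (auto simp: T_def)
  have c: "(\<Sum>k\<in>T - {i, j}. \<epsilon> k * real (sw i j n k)) = (\<Sum>k\<in>T - {i, j}. \<epsilon> k * real (n k))"
    by (rule sum.cong) (auto simp: sw_def)
  have E: "(\<Sum>k\<in>T. \<epsilon> k * real (sw i j n k)) = (\<Sum>k\<in>T. \<epsilon> k * real (n k)) + (\<epsilon> j - \<epsilon> i) * (real (n i) - real (n j))"
    unfolding sum_two[OF fT ij assms(1), of "\<lambda>k. \<epsilon> k * real (sw i j n k)"] sum_two[OF fT ij assms(1), of "\<lambda>k. \<epsilon> k * real (n k)"] c
    using assms(1) by (simp add: sw_def algebra_simps)
  show ?thesis
    unfolding weightT[OF fT s1] weightT[OF fT s2] mult_exp_exp E by (simp add: algebra_simps)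
qed


lemma t_nonneg:
  fixes c t :: real assumes "c > 0" shows "t * (1 - exp (- c * t)) \<ge> 0"
proof (cases "t \<ge> 0")
  case True
  then have "exp (- c * t) \<le> 1" using assms by (simp add: mult_nonneg_nonneg)
  then show ?thesis using True by simp
next
  case False
  then have "exp (- c * t) \<ge> 1" using assms by (simp add: mult_pos_neg less_imp_le)
  then show ?thesis using False by (simp add: mult_nonpos_nonpos)
qed

theorem lemma6:
  fixes \<epsilon> :: "nat \<Rightarrow> real" and \<beta> :: real and N i j :: nat
  assumes "\<beta> > 0"
    and "summable (\<lambda>k. exp (- \<beta> * \<epsilon> k))"
    and "N \<ge> 1"
    and "\<epsilon> i < \<epsilon> j"
  shows "canon_mean_occ \<beta> \<epsilon> N j < canon_mean_occ \<beta> \<epsilon> N i"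
proof -
  have ij: "i \<noteq> j" using assms(4) by auto
  define S where "S = occ_configs N"
  define w where "w = boltz_weight \<beta> \<epsilon>"
  define d where "d = \<epsilon> j - \<epsilon> i"
  have d: "d > 0" using assms(4) by (simp add: d_def)
  define a where "a = (\<Sum>\<^sub>\<infinity>n\<in>S. real (n i) * w n)"
  define b where "b = (\<Sum>\<^sub>\<infinity>n\<in>S. real (n j) * w n)"
  define Z where "Z = (\<Sum>\<^sub>\<infinity>n\<in>S. w n)"
  have wS: "w summable_on S" unfolding w_def S_def by (rule weight_summable[OF assms(2)])
  have ha: "((\<lambda>n. real (n i) * w n) has_sum a) S"
    unfolding a_def w_def S_def using occ_weight_summable[OF assms(2)] by simp
  have hb: "((\<lambda>n. real (n j) * w n) has_sum b) S"
    unfolding b_def w_def S_def using occ_weight_summable[OF assms(2)] by simp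
  define f where "f n = (real (n i) - real (n j)) * w n" for n
  have hf: "(f has_sum (a - b)) S" unfolding f_def
    using has_sum_add[OF ha has_sum_uminus[where a="- b", THEN iffD2, simplified, OF hb]] by (simp add: f_def algebra_simps)
  have bij: "bij_betw (sw i j) S S" unfolding S_def by (rule sw_bij[OF ij])
  have hf2: "((\<lambda>n. f (sw i j n)) has_sum (a - b)) S"
    using has_sum_reindex_bij_betw[OF bij] hf by blast
  define h where "h n = f n + f (sw i j n)" for n
  have hh: "(h has_sum (2 * (a - b))) S" unfolding h_def
    using has_sum_add[OF hf hf2] by (simp add: h_def)
  have hform: "h n = (real (n i) - real (n j)) * w n * (1 - exp (- (\<beta> * d) * (real (n i) - real (n j))))"
    if "n \<in> S" for n
    using sw_weight[OF ij that[unfolded S_def], of \<beta> \<epsilon>]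
    by (simp add: h_def f_def w_def d_def sw_def ij algebra_simps)
  have hnn: "h n \<ge> 0" if "n \<in> S" for n
  proof -
    have "0 \<le> (real (n i) - real (n j)) * (1 - exp (- (\<beta> * d) * (real (n i) - real (n j)))) * w n"
      using mult_nonneg_nonneg[OF t_nonneg[of "\<beta> * d" "real (n i) - real (n j)"] weight_nonneg[of \<beta> \<epsilon> n]] assms(1) d
      by (simp add: w_def)
    then show ?thesis using hform[OF that] by (simp add: algebra_simps)
  qed
  define e where "e = (\<lambda>k. if k = i then N else (0::nat))"
  have eS: "e \<in> S" unfolding S_def
    by (rule occ_configsI[of "{i}"]) (auto simp: e_def occ_support_def)
  have we: "w e > 0" by (simp add: w_def boltz_weight_def)
  have he: "h e > 0"
  proof -
    have "exp (- (\<beta> * d) * real N) < 1" using assms(1,3) d by simp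
    then show ?thesis using hform[OF eS] we assms(3) ij by (simp add: e_def)
  qed
  have "h e \<le> infsum h S"
    using infsum_mono2[of h "{e}" S] hh eS hnn summable_on_finite[of "{e}" h] by (auto simp: summable_on_def)
  also have "infsum h S = 2 * (a - b)" using hh by (rule infsumI)
  finally have ab: "b < a" using he by simp
  have "w e \<le> Z"
    using infsum_mono2[of w "{e}" S] wS eS by (auto simp: Z_def w_def weight_nonneg)
  then have Z: "Z > 0" using we by simp
  have "b / Z < a / Z" using ab Z by (rule divide_strict_right_mono)
  then show ?thesis
    by (simp add: canon_mean_occ_def canon_Z_def a_def b_def Z_def S_def w_def)
qed

end
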